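(* The following non-implications hold; each item asserts the existence of a probability space $(\Omega,\mathcal{F},P)$ and real random variables $X, X_1, X_2, \dots$ on it with the stated properties. (i) There exist such $X,X_n$ with $X_n\xrightarrow{S_1\text{-}d}X$ but not $X_n\xrightarrow{S_2\text{-}d}X$; and there exist such $X,X_n$ with $X_n\xrightarrow{S_2\text{-}d}X$ but not $X_n\xrightarrow{S_1\text{-}d}X$. (ii) There exist such $X,X_n$ with $X_n\xrightarrow{S\text{-}L^\infty}X$ but not $X_n\xrightarrow{S_2\text{-}d}X$. (iii) There exist such $X,X_n$ with $X_n\xrightarrow{S\text{-}L^1}X$ but not $X_n\xrightarrow{S_2\text{-}d}X$. (iv) For every $\alpha>0$ there exist such $X,X_n$ with $X_n\xrightarrow{S_\alpha\text{-}a.s.}X$ but not $X_n\xrightarrow{S_1\text{-}d}X$. (v) For each $i\in\{1,2\}$ there exist such $X,X_n$ with $X_n$ converging completely to $X$ but not $X_n\xrightarrow{S_i\text{-}d}X$.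
   Context: Let $X,X_1,X_2,\dots$ be real random variables on a probability space $(\Omega,\mathcal{F},P)$, and let $F_n(x)=P(X_n\le x)$ and $F(x)=P(X\le x)$ be their distribution functions. - Complete convergence: for every $\varepsilon>0$, $\sum_{n=1}^\infty P(|X_n-X|\ge\varepsilon)<\infty$. - $X_n\xrightarrow{S\text{-}L^p}X$ ($p>0$): $\sum_{n=1}^\infty E[|X_n-X|^p]<\infty$. - $X_n\xrightarrow{S\text{-}L^\infty}X$: $\sum_{n=1}^\infty \|X_n-X\|_\infty<\infty$, where $\|\cdot\|_\infty$ is the essential supremum norm. - $X_n\xrightarrow{S_\alpha\text{-}a.s.}X$ ($\alpha>0$): $\sum_{n=1}^\infty |X_n-X|^\alpha<\infty$ almost surely. - $X_n\xrightarrow{S_1\text{-}d}X$: for every bounded Lipschitz continuous $f:\mathbb{R}\to\mathbb{R}$, $\sum_{n=1}^\infty |E[f(X_n)-f(X)]|<\infty$. - $X_n\xrightarrow{S_2\text{-}d}X$: for every continuity point $x$ of $F$, $\sum_{n=1}^\infty |F_n(x)-F(x)|<\infty$. *)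

theory Defs
  imports "HOL-Probability.Probability"
begin

text \<open>Standing setting: a probability space M with real random variables X and
  X_n (indexed by nat; starting the index at 0 instead of 1 does not affect any
  of the summability conditions).\<close>

definition rv_setting :: "'a measure \<Rightarrow> ('a \<Rightarrow> real) \<Rightarrow> (nat \<Rightarrow> 'a \<Rightarrow> real) \<Rightarrow> bool" where
  "rv_setting M X Xs \<longleftrightarrow> prob_space M \<and> X \<in> borel_measurable M \<and> (\<forall>n. Xs n \<in> borel_measurable M)"

definition complete_conv :: "'a measure \<Rightarrow> (nat \<Rightarrow> 'a \<Rightarrow> real) \<Rightarrow> ('a \<Rightarrow> real) \<Rightarrow> bool" where
  "complete_conv M Xs X \<longleftrightarrow>
     (\<forall>\<epsilon>>0. summable (\<lambda>n. measure M {\<omega>\<in>space M. \<bar>Xs n \<omega> - X \<omega>\<bar> \<ge> \<epsilon>}))"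

definition S_Lp_conv :: "real \<Rightarrow> 'a measure \<Rightarrow> (nat \<Rightarrow> 'a \<Rightarrow> real) \<Rightarrow> ('a \<Rightarrow> real) \<Rightarrow> bool" where
  "S_Lp_conv p M Xs X \<longleftrightarrow>
     (\<Sum>n. \<integral>\<^sup>+ \<omega>. ennreal (\<bar>Xs n \<omega> - X \<omega>\<bar> powr p) \<partial>M) < \<infinity>"

definition S_Linf_conv :: "'a measure \<Rightarrow> (nat \<Rightarrow> 'a \<Rightarrow> real) \<Rightarrow> ('a \<Rightarrow> real) \<Rightarrow> bool" where
  "S_Linf_conv M Xs X \<longleftrightarrow>
     (\<forall>n. esssup M (\<lambda>\<omega>. ereal \<bar>Xs n \<omega> - X \<omega>\<bar>) < \<infinity>) \<and>
     summable (\<lambda>n. real_of_ereal (esssup M (\<lambda>\<omega>. ereal \<bar>Xs n \<omega> - X \<omega>\<bar>)))"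

definition S_as_conv :: "real \<Rightarrow> 'a measure \<Rightarrow> (nat \<Rightarrow> 'a \<Rightarrow> real) \<Rightarrow> ('a \<Rightarrow> real) \<Rightarrow> bool" where
  "S_as_conv \<alpha> M Xs X \<longleftrightarrow> (AE \<omega> in M. summable (\<lambda>n. \<bar>Xs n \<omega> - X \<omega>\<bar> powr \<alpha>))"

definition S1_d_conv :: "'a measure \<Rightarrow> (nat \<Rightarrow> 'a \<Rightarrow> real) \<Rightarrow> ('a \<Rightarrow> real) \<Rightarrow> bool" where
  "S1_d_conv M Xs X \<longleftrightarrow>
     (\<forall>f::real \<Rightarrow> real. bounded (range f) \<and> (\<exists>L. \<forall>x y. \<bar>f x - f y\<bar> \<le> L * \<bar>x - y\<bar>) \<longrightarrow>
        summable (\<lambda>n. \<bar>(\<integral>\<omega>. f (Xs n \<omega>) \<partial>M) - (\<integral>\<omega>. f (X \<omega>) \<partial>M)\<bar>))"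

definition cdf_of :: "'a measure \<Rightarrow> ('a \<Rightarrow> real) \<Rightarrow> real \<Rightarrow> real" where
  "cdf_of M Y x = measure M {\<omega>\<in>space M. Y \<omega> \<le> x}"

definition S2_d_conv :: "'a measure \<Rightarrow> (nat \<Rightarrow> 'a \<Rightarrow> real) \<Rightarrow> ('a \<Rightarrow> real) \<Rightarrow> bool" where
  "S2_d_conv M Xs X \<longleftrightarrow>
     (\<forall>x. isCont (cdf_of M X) x \<longrightarrow> summable (\<lambda>n. \<bar>cdf_of M (Xs n) x - cdf_of M X x\<bar>))"

end

theory Submission
  imports Defs
begin

definition U :: "real measure" where "U = uniform_measure lborel {0..1}"

lemma U_prob: "prob_space U"
  unfolding U_def by (rule prob_space_uniform_measure) auto
lemma space_U[simp]: "space U = UNIV" and sets_U[simp]: "sets U = sets borel"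
  unfolding U_def by auto
lemma measure_U: "B \<in> sets borel \<Longrightarrow> measure U B = measure lborel ({0..1} \<inter> B)"
  unfolding U_def by (subst measure_uniform_measure) auto
lemma meas_U[measurable]: "f \<in> borel_measurable borel \<Longrightarrow> f \<in> borel_measurable U"
  unfolding measurable_cong_sets[OF sets_U refl] .
lemma measure_U_UNIV[simp]: "measure U UNIV = 1"
  using prob_space.prob_space[OF U_prob] by simp
lemma emeasure_U_UNIV[simp]: "emeasure U UNIV = 1"
  using prob_space.emeasure_space_1[OF U_prob] by simp
lemma integral_U_const[simp]: "(\<integral>\<omega>. c \<partial>U) = (c::real)"
  by simp

lemma cdf_cont:
  fixes X :: "real \<Rightarrow> real"
  assumes X[measurable]: "X \<in> borel_measurable borel" and "measure U {\<omega>. X \<omega> = x} = 0"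
  shows "isCont (cdf_of U X) x"
proof -
  interpret prob_space U by (rule U_prob)
  have Xm: "X \<in> measurable U borel" by (rule meas_U[OF X])
  have pd: "prob_space (distr U borel X)" by (rule prob_space_distr[OF Xm])
  interpret D: finite_borel_measure "distr U borel X"
    by (intro finite_borel_measure.intro prob_space.finite_measure[OF pd])
       (simp add: finite_borel_measure_axioms_def)
  have eq1: "cdf_of U X y = cdf (distr U borel X) y" for y
  proof -
    have "cdf (distr U borel X) y = measure (distr U borel X) {..y}" by (simp only: cdf_def)
    also have "\<dots> = measure U (X -` {..y} \<inter> space U)" by (rule measure_distr[OF Xm]) simp
    also have "X -` {..y} \<inter> space U = {\<omega> \<in> space U. X \<omega> \<le> y}" by auto
    finally show ?thesis unfolding cdf_of_def by simp
  qed
  have eq: "cdf_of U X = cdf (distr U borel X)" using eq1 by blast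
  have "measure (distr U borel X) {x} = measure U (X -` {x} \<inter> space U)"
    by (rule measure_distr[OF Xm]) simp
  also have "X -` {x} \<inter> space U = {\<omega>. X \<omega> = x}" by auto
  finally have "measure (distr U borel X) {x} = 0" using assms(2) by simp
  then show ?thesis unfolding eq D.isCont_cdf .
qed

definition a :: "nat \<Rightarrow> real" where "a n = inverse (real (Suc n))"

lemma a_pos: "0 < a n" and a_le1: "a n \<le> 1"
  unfolding a_def by (auto simp: inverse_le_1_iff)

lemma a_not_summable: "\<not> summable a"
proof -
  have "\<not> summable (\<lambda>n. inverse (of_nat (Suc n)) :: real)"
    using not_summable_harmonic[where 'a=real] summable_Suc_iff[of "\<lambda>n. inverse (of_nat n) :: real"]
    by simp
  then show ?thesis unfolding a_def by simp
qed

lemma a2_summable: "summable (\<lambda>n. (a n)^2)"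
proof -
  have "summable (\<lambda>n. inverse (of_nat (Suc n) ^ 2) :: real)"
    using inverse_power_summable[of 2, where 'a=real] summable_Suc_iff[of "\<lambda>n. inverse (of_nat n ^ 2) :: real"]
    by simp
  then show ?thesis unfolding a_def by (simp add: power_inverse)
qed

lemma a_small: "\<epsilon> > 0 \<Longrightarrow> \<exists>N. \<forall>n\<ge>N. a n < \<epsilon>"
proof -
  assume "\<epsilon> > 0"
  then obtain N where N: "inverse (real (Suc N)) < \<epsilon>" using reals_Archimedean by blast
  have "a n < \<epsilon>" if "N \<le> n" for n
  proof -
    have "a n \<le> a N" using that unfolding a_def by (simp add: le_imp_inverse_le)
    moreover have "a N < \<epsilon>" using N unfolding a_def by simp
    ultimately show ?thesis by linarith
  qed
  then show ?thesis by blast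
qed

lemma summable_ev0:
  fixes f :: "nat \<Rightarrow> real"
  assumes "eventually (\<lambda>n. f n = 0) sequentially"
  shows "summable f"
proof -
  have "summable f = summable (\<lambda>n. 0::real)" using assms by (rule summable_cong)
  then show ?thesis by simp
qed

definition f0 :: "real \<Rightarrow> real" where "f0 x = max 0 (min 1 x)"

lemma notS1:
  assumes "\<not> summable (\<lambda>n. \<bar>(\<integral>\<omega>. f0 (Xs n \<omega>) \<partial>U) - (\<integral>\<omega>. f0 (X \<omega>) \<partial>U)\<bar>)"
  shows "\<not> S1_d_conv U Xs X"
proof -
  have "bounded (range f0)"
    by (rule bounded_subset[OF bounded_closed_interval[of 0 1]]) (auto simp: f0_def)
  moreover have "\<forall>x y. \<bar>f0 x - f0 y\<bar> \<le> 1 * \<bar>x - y\<bar>"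
    by (auto simp: f0_def)
  ultimately show ?thesis using assms unfolding S1_d_conv_def by blast
qed

lemma measure_const_set:
  assumes "\<epsilon> > 0" "c \<ge> 0"
  shows "measure U {\<omega>\<in>space U. c \<ge> \<epsilon>} \<le> c / \<epsilon>"
proof (cases "c \<ge> \<epsilon>")
  case True
  then show ?thesis using assms by (simp add: field_simps)
next
  case False
  then show ?thesis using assms by simp
qed

lemma lipschitz_cont:
  fixes f :: "real \<Rightarrow> real"
  assumes "\<forall>x y. \<bar>f x - f y\<bar> \<le> L * \<bar>x - y\<bar>"
  shows "continuous_on UNIV f" and "L \<ge> 0"
proof -
  have "\<bar>f 1 - f 0\<bar> \<le> L" using assms[rule_format, of 1 0] by simp
  then have "0 \<le> L" by (meson abs_ge_zero order_trans)
  then show "L \<ge> 0" .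
  have "L-lipschitz_on UNIV f"
    unfolding lipschitz_on_def using \<open>0 \<le> L\<close> assms by (simp add: dist_real_def)
  then show "continuous_on UNIV f" by (rule lipschitz_on_continuous_on)
qed

lemma E2:
  defines "X \<equiv> (\<lambda>_. 0::real)" and "Xs \<equiv> (\<lambda>n (_::real). a n)"
  shows "rv_setting U X Xs" and "S2_d_conv U Xs X" and "\<not> S1_d_conv U Xs X"
    and "complete_conv U Xs X"
proof -
  show "rv_setting U X Xs" unfolding rv_setting_def X_def Xs_def using U_prob by simp
  show "\<not> S1_d_conv U Xs X"
    by (rule notS1) (use a_not_summable a_pos a_le1 in \<open>simp add: X_def Xs_def f0_def abs_of_pos\<close>)
  show "complete_conv U Xs X"
    unfolding complete_conv_def
  proof (intro allI impI)
    fix \<epsilon> :: real assume e: "\<epsilon> > 0"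
    show "summable (\<lambda>n. measure U {\<omega> \<in> space U. \<epsilon> \<le> \<bar>Xs n \<omega> - X \<omega>\<bar>})"
    proof -
      obtain N where N: "\<forall>n\<ge>N. a n < \<epsilon>" using a_small e by blast
      have "eventually (\<lambda>n. measure U {\<omega> \<in> space U. \<epsilon> \<le> \<bar>Xs n \<omega> - X \<omega>\<bar>} = 0) sequentially"
        unfolding eventually_sequentially using N a_pos
        by (auto simp: X_def Xs_def not_le[symmetric] abs_of_pos)
      then show ?thesis by (rule summable_ev0)
    qed
  qed
  show "S2_d_conv U Xs X"
    unfolding S2_d_conv_def
  proof (intro allI impI)
    fix x assume cont: "isCont (cdf_of U X) x"
    have F: "cdf_of U X y = (if 0 \<le> y then 1 else 0)" for y
      by (simp add: cdf_of_def X_def)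
    have Fn: "cdf_of U (Xs n) y = (if a n \<le> y then 1 else 0)" for y n
      by (simp add: cdf_of_def Xs_def)
    have "x \<noteq> 0"
    proof
      assume x0: "x = 0"
      have "(\<lambda>k. cdf_of U X (- a k)) \<longlonglongrightarrow> cdf_of U X (- 0)"
        apply (rule isCont_tendsto_compose[where g="cdf_of U X"])
        using cont x0 apply simp
        apply (rule tendsto_minus)
        unfolding a_def by (rule LIMSEQ_inverse_real_of_nat)
      then have "(\<lambda>k. 0::real) \<longlonglongrightarrow> 1" using a_pos
        by (simp add: F not_le[symmetric])
      then show False using LIMSEQ_unique[OF tendsto_const] by fastforce
    qed
    show "summable (\<lambda>n. \<bar>cdf_of U (Xs n) x - cdf_of U X x\<bar>)"
    proof (cases "x < 0")
      case True
      have "\<not> a n \<le> x" for n using a_pos[of n] True by linarith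
      then show ?thesis using True by (simp add: F Fn)
    next
      case False
      with \<open>x \<noteq> 0\<close> have "x > 0" by simp
      then obtain N where N: "\<forall>n\<ge>N. a n < x" using a_small by blast
      have "eventually (\<lambda>n. \<bar>cdf_of U (Xs n) x - cdf_of U X x\<bar> = 0) sequentially"
        unfolding eventually_sequentially using N \<open>x > 0\<close> by (auto simp: F Fn less_imp_le intro!: exI[of _ N])
      then show ?thesis by (rule summable_ev0)
    qed
  qed
qed

lemma E3:
  defines "X \<equiv> (\<lambda>_. 0::real)" and "Xs \<equiv> (\<lambda>n (\<omega>::real). indicator {0<..a n} \<omega> :: real)"
  shows "rv_setting U X Xs" and "S_as_conv \<alpha> U Xs X" and "\<not> S1_d_conv U Xs X"
proof -
  show "rv_setting U X Xs" unfolding rv_setting_def X_def Xs_def using U_prob by simp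
  show "S_as_conv \<alpha> U Xs X"
    unfolding S_as_conv_def
  proof (rule AE_I2)
    fix \<omega> :: real
    have "eventually (\<lambda>n. \<bar>Xs n \<omega> - X \<omega>\<bar> powr \<alpha> = 0) sequentially"
    proof (cases "\<omega> > 0")
      case True
      then obtain N where N: "\<forall>n\<ge>N. a n < \<omega>" using a_small by blast
      have "\<bar>Xs n \<omega> - X \<omega>\<bar> powr \<alpha> = 0" if "n \<ge> N" for n
      proof -
        have "\<omega> \<notin> {0<..a n}" using N that by auto
        then show ?thesis by (simp add: X_def Xs_def)
      qed
      then show ?thesis unfolding eventually_sequentially by blast
    next
      case False
      then have "\<omega> \<notin> {0<..a n}" for n by auto
      then show ?thesis by (simp add: X_def Xs_def)
    qed
    then show "summable (\<lambda>n. \<bar>Xs n \<omega> - X \<omega>\<bar> powr \<alpha>)"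
      by (rule summable_ev0)
  qed
  show "\<not> S1_d_conv U Xs X"
  proof (rule notS1)
    have f0i: "f0 (Xs n \<omega>) = indicator {0<..a n} \<omega>" for n \<omega>
      by (simp add: Xs_def f0_def indicator_def)
    have "(\<integral>\<omega>. f0 (Xs n \<omega>) \<partial>U) = a n" for n
    proof -
      have "(\<integral>\<omega>. f0 (Xs n \<omega>) \<partial>U) = measure U {0<..a n}"
        unfolding f0i by simp
      also have "\<dots> = measure lborel ({0..1} \<inter> {0<..a n})" by (rule measure_U) simp
      also have "{0..1} \<inter> {0<..a n} = {0<..a n}" using a_le1[of n] by auto
      also have "measure lborel {0<..a n} = a n" using a_pos[of n] by simp
      finally show ?thesis .
    qed
    then show "\<not> summable (\<lambda>n. \<bar>(\<integral>\<omega>. f0 (Xs n \<omega>) \<partial>U) - (\<integral>\<omega>. f0 (X \<omega>) \<partial>U)\<bar>)"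
      using a_not_summable a_pos by (simp add: X_def f0_def abs_of_pos)
  qed
qed

lemma E1:
  defines "X \<equiv> (\<lambda>\<omega>::real. \<omega>^2)" and "Xs \<equiv> (\<lambda>n (\<omega>::real). \<omega>^2 - (a n)^2)"
  shows "rv_setting U X Xs" and "S_Linf_conv U Xs X" and "S_Lp_conv 1 U Xs X"
    and "complete_conv U Xs X" and "S1_d_conv U Xs X" and "\<not> S2_d_conv U Xs X"
proof -
  have d: "\<bar>Xs n \<omega> - X \<omega>\<bar> = (a n)^2" for n \<omega> by (simp add: X_def Xs_def)
  show "rv_setting U X Xs" unfolding rv_setting_def X_def Xs_def using U_prob by simp
  show "S_Linf_conv U Xs X"
    unfolding S_Linf_conv_def d by (simp add: esssup_const a2_summable)
  show "S_Lp_conv 1 U Xs X"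
    unfolding S_Lp_conv_def d
  proof -
    have e: "(\<integral>\<^sup>+ \<omega>. ennreal ((a n)\<^sup>2 powr 1) \<partial>U) = ennreal ((a n)^2)" for n
    proof -
      have "(a n)\<^sup>2 powr 1 = (a n)^2" by (rule powr_one) simp
      then show ?thesis by (simp only: nn_integral_const space_U emeasure_U_UNIV mult_1_right)
    qed
    have "(\<Sum>n. \<integral>\<^sup>+ \<omega>. ennreal ((a n)\<^sup>2 powr 1) \<partial>U) = (\<Sum>n. ennreal ((a n)^2))"
      by (simp only: e)
    also have "\<dots> < \<infinity>"
    proof -
      have "(\<Sum>n. ennreal ((a n)^2)) \<noteq> top"
        by (rule ennreal_suminf_neq_top[OF a2_summable]) simp
      then show ?thesis unfolding infinity_ennreal_def using less_top by blast
    qed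
    finally show "(\<Sum>n. \<integral>\<^sup>+ \<omega>. ennreal ((a n)\<^sup>2 powr 1) \<partial>U) < \<infinity>" .
  qed
  show "complete_conv U Xs X"
    unfolding complete_conv_def d
  proof (intro allI impI)
    fix \<epsilon> :: real assume e: "\<epsilon> > 0"
    show "summable (\<lambda>n. measure U {\<omega> \<in> space U. \<epsilon> \<le> (a n)^2})"
    proof (rule summable_comparison_test[where g="\<lambda>n. (a n)^2 / \<epsilon>"])
      show "summable (\<lambda>n. (a n)^2 / \<epsilon>)" using a2_summable by (rule summable_divide)
      show "\<exists>N. \<forall>n\<ge>N. norm (measure U {\<omega> \<in> space U. \<epsilon> \<le> (a n)^2}) \<le> (a n)^2 / \<epsilon>"
      proof (intro exI allI impI)
        fix n :: nat
        have "measure U {\<omega> \<in> space U. \<epsilon> \<le> (a n)^2} \<le> (a n)^2 / \<epsilon>"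
          by (rule measure_const_set[OF e]) simp
        then show "norm (measure U {\<omega> \<in> space U. \<epsilon> \<le> (a n)^2}) \<le> (a n)^2 / \<epsilon>"
          by simp
      qed
    qed
  qed
  show "S1_d_conv U Xs X"
    unfolding S1_d_conv_def
  proof (intro allI impI)
    fix f :: "real \<Rightarrow> real"
    assume "bounded (range f) \<and> (\<exists>L. \<forall>x y. \<bar>f x - f y\<bar> \<le> L * \<bar>x - y\<bar>)"
    then obtain L where bf: "bounded (range f)" and L: "\<forall>x y. \<bar>f x - f y\<bar> \<le> L * \<bar>x - y\<bar>" by blast
    have fc: "continuous_on UNIV f" and L0: "L \<ge> 0" using lipschitz_cont[OF L] by auto
    have fm[measurable]: "f \<in> borel_measurable borel"
      using fc by (rule borel_measurable_continuous_onI)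
    interpret prob_space U by (rule U_prob)
    obtain B where B0: "\<forall>x\<in>range f. norm x \<le> B" using bf unfolding bounded_iff by blast
    have B: "\<bar>f x\<bar> \<le> B" for x using B0 by simp
    have int: "integrable U (\<lambda>\<omega>. f (g \<omega>))" if g: "g \<in> borel_measurable borel" for g
    proof (rule integrable_const_bound[where B=B])
      show "AE \<omega> in U. norm (f (g \<omega>)) \<le> B" using B by simp
      show "(\<lambda>\<omega>. f (g \<omega>)) \<in> borel_measurable U"
        by (rule measurable_compose[OF meas_U[OF g] fm])
    qed
    have "\<bar>(\<integral>\<omega>. f (Xs n \<omega>) \<partial>U) - (\<integral>\<omega>. f (X \<omega>) \<partial>U)\<bar> \<le> L * (a n)^2" for n
    proof -
      have "\<bar>(\<integral>\<omega>. f (Xs n \<omega>) \<partial>U) - (\<integral>\<omega>. f (X \<omega>) \<partial>U)\<bar> = \<bar>\<integral>\<omega>. f (Xs n \<omega>) - f (X \<omega>) \<partial>U\<bar>"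
      proof -
        have i1: "integrable U (\<lambda>\<omega>. f (Xs n \<omega>))" by (rule int) (simp add: Xs_def)
        have i2: "integrable U (\<lambda>\<omega>. f (X \<omega>))" by (rule int) (simp add: X_def)
        show ?thesis by (simp only: Bochner_Integration.integral_diff[OF i1 i2])
      qed
      also have "\<dots> \<le> (\<integral>\<omega>. \<bar>f (Xs n \<omega>) - f (X \<omega>)\<bar> \<partial>U)"
        by (rule integral_abs_bound)
      also have "\<dots> \<le> (\<integral>\<omega>. L * (a n)^2 \<partial>U)"
      proof (rule integral_mono)
        show "integrable U (\<lambda>\<omega>. \<bar>f (Xs n \<omega>) - f (X \<omega>)\<bar>)"
          by (intro integrable_abs Bochner_Integration.integrable_diff int) (simp_all add: X_def Xs_def)
        show "integrable U (\<lambda>\<omega>. L * (a n)^2)" by simp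
        fix \<omega>
        show "\<bar>f (Xs n \<omega>) - f (X \<omega>)\<bar> \<le> L * (a n)^2"
          using L[rule_format, of "Xs n \<omega>" "X \<omega>"] d[of n \<omega>] by simp
      qed
      also have "\<dots> = L * (a n)^2" by simp
      finally show ?thesis .
    qed
    then have bnd: "\<exists>N. \<forall>n\<ge>N. norm \<bar>(\<integral>\<omega>. f (Xs n \<omega>) \<partial>U) - (\<integral>\<omega>. f (X \<omega>) \<partial>U)\<bar> \<le> L * (a n)^2"
      by (intro exI[of _ 0]) simp
    show "summable (\<lambda>n. \<bar>(\<integral>\<omega>. f (Xs n \<omega>) \<partial>U) - (\<integral>\<omega>. f (X \<omega>) \<partial>U)\<bar>)"
      by (rule summable_comparison_test[OF bnd summable_mult[OF a2_summable]])
  qed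
  show "\<not> S2_d_conv U Xs X"
  proof
    assume S2: "S2_d_conv U Xs X"
    have sq: "{0..1} \<inter> {\<omega>::real. \<omega>^2 \<le> c^2} = {0..c}" if "0 \<le> c" "c \<le> 1" for c
    proof (intro set_eqI iffI)
      fix \<omega> :: real
      assume "\<omega> \<in> {0..1} \<inter> {\<omega>. \<omega>^2 \<le> c^2}"
      then have "\<omega> \<ge> 0" "\<omega>^2 \<le> c^2" by auto
      then have "\<omega> \<le> c" using abs_le_square_iff[of \<omega> c] that by simp
      then show "\<omega> \<in> {0..c}" using \<open>\<omega> \<ge> 0\<close> by simp
    next
      fix \<omega> :: real
      assume "\<omega> \<in> {0..c}"
      then have "\<omega> \<ge> 0" "\<omega> \<le> c" by auto
      then have "\<omega>^2 \<le> c^2" using power_mono[of \<omega> c 2] by simp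
      then show "\<omega> \<in> {0..1} \<inter> {\<omega>. \<omega>^2 \<le> c^2}" using \<open>\<omega> \<ge> 0\<close> \<open>\<omega> \<le> c\<close> that by simp
    qed
    have "isCont (cdf_of U X) 0"
    proof (rule cdf_cont)
      show "X \<in> borel_measurable borel" unfolding X_def by simp
      have "measure U {\<omega>. X \<omega> = 0} = measure lborel ({0..1} \<inter> {\<omega>. X \<omega> = 0})"
        by (rule measure_U) (simp add: X_def)
      also have "{0..1} \<inter> {\<omega>. X \<omega> = 0} = {0::real}" by (auto simp: X_def)
      finally show "measure U {\<omega>. X \<omega> = 0} = 0" by simp
    qed
    with S2 have sm: "summable (\<lambda>n. \<bar>cdf_of U (Xs n) 0 - cdf_of U X 0\<bar>)"
      unfolding S2_d_conv_def by blast
    have c0: "cdf_of U X 0 = 0"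
    proof -
      have "cdf_of U X 0 = measure lborel ({0..1} \<inter> {\<omega>. \<omega>^2 \<le> (0::real)^2})"
        unfolding cdf_of_def by (subst measure_U) (auto simp: X_def)
      also have "\<dots> = 0" by (subst sq) auto
      finally show ?thesis .
    qed
    have cn: "cdf_of U (Xs n) 0 = a n" for n
    proof -
      have "cdf_of U (Xs n) 0 = measure lborel ({0..1} \<inter> {\<omega>. \<omega>^2 \<le> (a n)^2})"
        unfolding cdf_of_def by (subst measure_U) (auto simp: Xs_def)
      also have "\<dots> = a n" using a_pos[of n] a_le1[of n] by (subst sq) auto
      finally show ?thesis .
    qed
    show False using sm a_not_summable a_pos by (simp add: c0 cn abs_of_pos)
  qed
qed

theorem proposition2p1:
  shows
  "((\<exists>(M::real measure) X Xs. rv_setting M X Xs \<and> S1_d_conv M Xs X \<and> \<not> S2_d_conv M Xs X) \<and>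
    (\<exists>(M::real measure) X Xs. rv_setting M X Xs \<and> S2_d_conv M Xs X \<and> \<not> S1_d_conv M Xs X))
   \<and> (\<exists>(M::real measure) X Xs. rv_setting M X Xs \<and> S_Linf_conv M Xs X \<and> \<not> S2_d_conv M Xs X)
   \<and> (\<exists>(M::real measure) X Xs. rv_setting M X Xs \<and> S_Lp_conv 1 M Xs X \<and> \<not> S2_d_conv M Xs X)
   \<and> (\<forall>\<alpha>::real. \<alpha> > 0 \<longrightarrow>
        (\<exists>(M::real measure) X Xs. rv_setting M X Xs \<and> S_as_conv \<alpha> M Xs X \<and> \<not> S1_d_conv M Xs X))
   \<and> (\<exists>(M::real measure) X Xs. rv_setting M X Xs \<and> complete_conv M Xs X \<and> \<not> S1_d_conv M Xs X)
   \<and> (\<exists>(M::real measure) X Xs. rv_setting M X Xs \<and> complete_conv M Xs X \<and> \<not> S2_d_conv M Xs X)"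
proof -
  have A: "\<exists>(M::real measure) X Xs. rv_setting M X Xs \<and> S1_d_conv M Xs X \<and> \<not> S2_d_conv M Xs X"
    by (intro exI conjI) (rule E1(1), rule E1(5), rule E1(6))
  have B: "\<exists>(M::real measure) X Xs. rv_setting M X Xs \<and> S2_d_conv M Xs X \<and> \<not> S1_d_conv M Xs X"
    by (intro exI conjI) (rule E2(1), rule E2(2), rule E2(3))
  have C: "\<exists>(M::real measure) X Xs. rv_setting M X Xs \<and> S_Linf_conv M Xs X \<and> \<not> S2_d_conv M Xs X"
    by (intro exI conjI) (rule E1(1), rule E1(2), rule E1(6))
  have D: "\<exists>(M::real measure) X Xs. rv_setting M X Xs \<and> S_Lp_conv 1 M Xs X \<and> \<not> S2_d_conv M Xs X"
    by (intro exI conjI) (rule E1(1), rule E1(3), rule E1(6))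
  have E: "\<forall>\<alpha>::real. \<alpha> > 0 \<longrightarrow>
        (\<exists>(M::real measure) X Xs. rv_setting M X Xs \<and> S_as_conv \<alpha> M Xs X \<and> \<not> S1_d_conv M Xs X)"
    by (intro allI impI exI conjI) (rule E3(1), rule E3(2), rule E3(3))
  have F: "\<exists>(M::real measure) X Xs. rv_setting M X Xs \<and> complete_conv M Xs X \<and> \<not> S1_d_conv M Xs X"
    by (intro exI conjI) (rule E2(1), rule E2(4), rule E2(3))
  have G: "\<exists>(M::real measure) X Xs. rv_setting M X Xs \<and> complete_conv M Xs X \<and> \<not> S2_d_conv M Xs X"
    by (intro exI conjI) (rule E1(1), rule E1(4), rule E1(6))
  show ?thesis by (intro conjI) (fact A, fact B, fact C, fact D, fact E, fact F, fact G)
qed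

end
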